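(* Let $\Gamma$ be a finite undirected simple graph with vertices $x_1,\dots,x_n$ and edge set $E$, let $G_\Gamma$ be the associated group, and let $y_1,\dots,y_N$ be the commutator generators of $G_\Gamma$ (notation as in the context). Let $i_0\in\{1,\dots,n\}$ and let $z_{i_0},t_1,\dots,t_N\in\mathbb{Z}$ with $z_{i_0}\neq 0$. Then \[h\Big(Z_{G_\Gamma}\Big(x_{i_0}^{z_{i_0}}\prod_{l=1}^N y_l^{t_l}\Big)\Big)=\deg(x_{i_0})+N+1,\] where $Z_{G_\Gamma}(g)$ denotes the centralizer of $g$ in $G_\Gamma$ and $h$ denotes the Hirsch number.
   Context: For a finite undirected simple graph $\Gamma$ with vertex set $\{x_1,\dots,x_n\}$ and edge set $E$, the group $G_\Gamma$ is defined by the presentation with generators $x_1,\dots,x_n$ and $y_{i,j}$ for each pair $i<j$ with $x_ix_j\notin E$, and relations $[x_j,x_i]=1$ if $x_ix_j\in E$; $[x_j,x_i]=y_{i,j}$ if $x_ix_j\notin E$ and $i<j$; and $[x_l,y_{i,j}]=1$ for all $l$ and all such $y_{i,j}$. (It is the 2-step nilpotent quotient of the right-angled Artin group of $\Gamma$.) Let $N$ be the number of pairs $i<j$ with $x_ix_j\notin E$, and enumerate the $y_{i,j}$ as $y_1,\dots,y_N$. Every element of $G_\Gamma$ is uniquely of the form $x_1^{z_1}\cdots x_n^{z_n}y_1^{t_1}\cdots y_N^{t_N}$ with $z_i,t_l\in\mathbb{Z}$. The Hirsch number $h(G)$ of a finitely generated nilpotent group $G$ is the number of infinite cyclic factors in any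 subnormal series of $G$ with cyclic factors. *)

theory Defs
  imports "HOL-Algebra.Algebra"
begin

text \<open>Vertices x_1..x_n are indexed by 0..n-1. The graph is given by an edge relation E
  (assumed symmetric and irreflexive in the theorem). An element
  x_1^z_1 ... x_n^z_n y_1^t_1 ... y_N^t_N is encoded by the pair (z, t), where
  z :: nat => int is supported on {0..<n} and t :: nat * nat => int is supported on the
  set of non-edges {(i,j). i < j < n, not E i j} (t (i,j) is the exponent of y_{i,j}).
  Multiplication: x_j^a x_i^b = x_i^b x_j^a y_{ij}^(a b) for i < j non-adjacent, with the
  y's central, hence
  (a,s)(b,u) = (a+b, s+u+c) with c(i,j) = a_j * b_i for non-edges i<j.\<close>

definition nonedges :: "nat \<Rightarrow> (nat \<Rightarrow> nat \<Rightarrow> bool) \<Rightarrow> (nat \<times> nat) set" where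
  "nonedges n E = {(i, j). i < j \<and> j < n \<and> \<not> E i j}"

definition GGamma_mult :: "nat \<Rightarrow> (nat \<Rightarrow> nat \<Rightarrow> bool)
    \<Rightarrow> (nat \<Rightarrow> int) \<times> (nat \<times> nat \<Rightarrow> int)
    \<Rightarrow> (nat \<Rightarrow> int) \<times> (nat \<times> nat \<Rightarrow> int)
    \<Rightarrow> (nat \<Rightarrow> int) \<times> (nat \<times> nat \<Rightarrow> int)" where
  "GGamma_mult n E g h =
     (\<lambda>i. fst g i + fst h i,
      \<lambda>p. snd g p + snd h p
            + (if p \<in> nonedges n E then fst g (snd p) * fst h (fst p) else 0))"

definition GGamma :: "nat \<Rightarrow> (nat \<Rightarrow> nat \<Rightarrow> bool)
    \<Rightarrow> ((nat \<Rightarrow> int) \<times> (nat \<times> nat \<Rightarrow> int)) monoid" where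
  "GGamma n E =
    \<lparr> carrier = {g. (\<forall>i. n \<le> i \<longrightarrow> fst g i = 0)
                     \<and> (\<forall>p. p \<notin> nonedges n E \<longrightarrow> snd g p = 0)},
      monoid.mult = GGamma_mult n E,
      monoid.one = ((\<lambda>_. 0), (\<lambda>_. 0)) \<rparr>"

definition vertex_degree :: "nat \<Rightarrow> (nat \<Rightarrow> nat \<Rightarrow> bool) \<Rightarrow> nat \<Rightarrow> nat" where
  "vertex_degree n E i = card {j. j < n \<and> E i j}"

definition centralizer :: "('a, 'b) monoid_scheme \<Rightarrow> 'a \<Rightarrow> 'a set" where
  "centralizer G g = {h \<in> carrier G. h \<otimes>\<^bsub>G\<^esub> g = g \<otimes>\<^bsub>G\<^esub> h}"

definition cyclic_subnormal_series ::
    "('a, 'b) monoid_scheme \<Rightarrow> 'a set \<Rightarrow> nat \<Rightarrow> (nat \<Rightarrow> 'a set) \<Rightarrow> bool" where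
  "cyclic_subnormal_series G H k S \<longleftrightarrow>
     S 0 = H \<and> S k = {\<one>\<^bsub>G\<^esub>} \<and>
     (\<forall>i\<le>k. subgroup (S i) G) \<and>
     (\<forall>i<k. S (Suc i) \<subseteq> S i \<and> S (Suc i) \<lhd> (G\<lparr>carrier := S i\<rparr>) \<and>
            cyclic_group ((G\<lparr>carrier := S i\<rparr>) Mod (S (Suc i))))"

definition num_infinite_factors ::
    "('a, 'b) monoid_scheme \<Rightarrow> nat \<Rightarrow> (nat \<Rightarrow> 'a set) \<Rightarrow> nat" where
  "num_infinite_factors G k S =
     card {i. i < k \<and> infinite (carrier ((G\<lparr>carrier := S i\<rparr>) Mod (S (Suc i))))}"

definition hirsch :: "('a, 'b) monoid_scheme \<Rightarrow> 'a set \<Rightarrow> nat" where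
  "hirsch G H = (THE m. \<exists>k S. cyclic_subnormal_series G H k S \<and> num_infinite_factors G k S = m)"

end

theory Submission
  imports Defs "HOL-Library.Function_Algebras"
begin



definition smul :: "int \<Rightarrow> ('x \<Rightarrow> int) \<Rightarrow> ('x \<Rightarrow> int)" where
  "smul k f = (\<lambda>x. k * f x)"

definition Qv :: "('x \<Rightarrow> int) \<Rightarrow> ('x \<Rightarrow> rat)" where
  "Qv f = (\<lambda>x. of_int (f x))"

definition addsub :: "('x \<Rightarrow> int) set \<Rightarrow> bool" where
  "addsub A \<longleftrightarrow> (\<lambda>_. 0) \<in> A \<and> (\<forall>a\<in>A. \<forall>b\<in>A. (\<lambda>x. a x + b x) \<in> A) \<and> (\<forall>a\<in>A. (\<lambda>x. - a x) \<in> A)"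

interpretation fvs: vector_space "\<lambda>(c::rat) (f::'x \<Rightarrow> rat). (\<lambda>x. c * f x)"
  by unfold_locales (auto simp: fun_eq_iff algebra_simps plus_fun_def)

definition rk :: "('x \<Rightarrow> int) set \<Rightarrow> nat" where
  "rk A = fvs.dim (Qv ` A)"

lemma addsub_smul_nat:
  assumes "addsub A" "a \<in> A" shows "smul (int k) a \<in> A"
proof (induction k)
  case 0 then show ?case using assms by (simp add: smul_def addsub_def)
next
  case (Suc k)
  then have "(\<lambda>x. smul (int k) a x + a x) \<in> A" using assms by (auto simp: addsub_def)
  moreover have "(\<lambda>x. smul (int k) a x + a x) = smul (int (Suc k)) a"
    by (auto simp: smul_def fun_eq_iff algebra_simps)
  ultimately show ?case by simp
qed

lemma addsub_smul:
  assumes "addsub A" "a \<in> A" shows "smul k a \<in> A"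
proof (cases "k \<ge> 0")
  case True
  then show ?thesis using addsub_smul_nat[OF assms, of "nat k"] by simp
next
  case False
  then have "smul (int (nat (-k))) a \<in> A" using addsub_smul_nat[OF assms] by blast
  then have "(\<lambda>x. - smul (int (nat (-k))) a x) \<in> A" using assms by (auto simp: addsub_def)
  moreover have "(\<lambda>x. - smul (int (nat (-k))) a x) = smul k a"
    using False by (auto simp: smul_def fun_eq_iff)
  ultimately show ?thesis by simp
qed

lemma addsub_add: "addsub A \<Longrightarrow> a \<in> A \<Longrightarrow> b \<in> A \<Longrightarrow> (\<lambda>x. a x + b x) \<in> A"
  by (auto simp: addsub_def)

lemma Qv_inj: "Qv a = Qv b \<Longrightarrow> a = b"
  by (auto simp: Qv_def fun_eq_iff)

lemma Qv_add: "Qv (\<lambda>x. a x + b x) = Qv a + Qv b"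
  by (auto simp: Qv_def fun_eq_iff)

lemma Qv_smul: "Qv (smul k a) = (\<lambda>x. of_int k * Qv a x)"
  by (auto simp: Qv_def smul_def fun_eq_iff)

lemma L_denom:
  assumes A: "addsub A" and v: "v \<in> fvs.span (Qv ` A)"
  shows "\<exists>m>0. \<exists>w\<in>A. Qv w = (\<lambda>x. of_int m * v x)"
  using v
proof (induction rule: fvs.span_induct_alt)
  case base
  have "(\<lambda>_. 0) \<in> A" using A by (simp add: addsub_def)
  moreover have "Qv (\<lambda>_. 0) = (\<lambda>x. of_int 1 * (0::'a\<Rightarrow>rat) x)" by (simp add: Qv_def fun_eq_iff)
  ultimately show ?case by (intro exI[of _ 1]) auto
next
  case (step c x y)
  from step.hyps obtain a where a: "a \<in> A" "x = Qv a" by auto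
  from step.IH obtain m w where mw: "m > 0" "w \<in> A" "Qv w = (\<lambda>x. of_int m * y x)" by auto
  obtain p q where pq: "quotient_of c = (p, q)" by (cases "quotient_of c")
  have q: "q > 0" using quotient_of_denom_pos[OF pq] .
  have c: "c = of_int p / of_int q" using quotient_of_div[OF pq] .
  define w' where "w' = (\<lambda>i. smul (m * p) a i + smul q w i)"
  have "w' \<in> A" unfolding w'_def using A a mw by (intro addsub_add addsub_smul) auto
  moreover have "Qv w' = (\<lambda>i. of_int (q * m) * ((\<lambda>i. c * x i) + y) i)"
  proof -
    have "Qv w' = (\<lambda>i. of_int (m*p) * Qv a i + of_int q * Qv w i)"
      by (simp add: w'_def Qv_add Qv_smul plus_fun_def)
    also have "\<dots> = (\<lambda>i. of_int (q * m) * ((\<lambda>i. c * x i) + y) i)"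
      using q mw(3) a(2) by (auto simp: c fun_eq_iff field_simps)
    finally show ?thesis .
  qed
  moreover have "q * m > 0" using q mw by simp
  ultimately show ?case by blast
qed

lemma sum_fun_apply: "(\<Sum>d\<in>D. f d) x = (\<Sum>d\<in>D. (f d x :: 'b::comm_monoid_add))"
proof (induction D rule: infinite_finite_induct)
  case (infinite A) then show ?case by (simp add: zero_fun_def)
next
  case empty then show ?case by (simp add: zero_fun_def)
next
  case (insert a A) then show ?case by (simp add: plus_fun_def)
qed

definition delta :: "'x \<Rightarrow> 'x \<Rightarrow> rat" where
  "delta d = (\<lambda>x. if x = d then 1 else 0)"

lemma L_supp_span:
  assumes D: "finite D" and f: "\<forall>x. x \<notin> D \<longrightarrow> f x = 0"
  shows "Qv f \<in> fvs.span (delta ` D)"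
proof -
  have "Qv f = (\<Sum>d\<in>D. (\<lambda>x. Qv f d * delta d x))"
  proof
    fix x
    have "(\<Sum>d\<in>D. (\<lambda>x. Qv f d * delta d x)) x = (\<Sum>d\<in>D. Qv f d * delta d x)"
      by (rule sum_fun_apply)
    also have "\<dots> = (\<Sum>d\<in>D. if x = d then Qv f x else 0)"
      by (rule sum.cong) (auto simp: delta_def)
    also have "\<dots> = (if x \<in> D then Qv f x else 0)"
      using D by (simp add: sum.delta)
    also have "\<dots> = Qv f x" using f by (auto simp: Qv_def)
    finally show "Qv f x = (\<Sum>d\<in>D. (\<lambda>x. Qv f d * delta d x)) x" by simp
  qed
  also have "\<dots> \<in> fvs.span (delta ` D)"
    by (intro fvs.span_sum fvs.span_scale fvs.span_base) auto
  finally show ?thesis .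
qed

lemma L_indep_fin:
  assumes D: "finite D" and supp: "\<forall>f\<in>A. \<forall>x. x \<notin> D \<longrightarrow> f x = 0"
    and B: "B \<subseteq> fvs.span (Qv ` A)" "fvs.independent B"
  shows "finite B"
proof -
  have "Qv ` A \<subseteq> fvs.span (delta ` D)" using L_supp_span[OF D] supp by auto
  then have "fvs.span (Qv ` A) \<subseteq> fvs.span (delta ` D)"
    by (intro fvs.span_minimal) auto
  then show ?thesis using fvs.independent_span_bound[of "delta ` D" B] B D by auto
qed

lemma L_span_incl:
  assumes "A' \<subseteq> A" and hyp: "\<forall>b\<in>A. \<exists>m>0. \<exists>j. (\<lambda>x. m * b x - j * a x) \<in> A'"
  shows "Qv ` A \<subseteq> fvs.span (insert (Qv a) (Qv ` A'))"
proof
  fix v assume "v \<in> Qv ` A"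
  then obtain b where b: "b \<in> A" "v = Qv b" by auto
  obtain m j where mj: "m > 0" "(\<lambda>x. m * b x - j * a x) \<in> A'" using hyp b by blast
  let ?S = "insert (Qv a) (Qv ` A')"
  define w where "w = (\<lambda>x. m * b x - j * a x)"
  have "(\<lambda>x. (1 / of_int m) * (Qv w + (\<lambda>x. of_int j * Qv a x)) x) \<in> fvs.span ?S"
    using mj unfolding w_def by (intro fvs.span_scale fvs.span_add fvs.span_base) auto
  moreover have "(\<lambda>x. (1 / of_int m) * (Qv w + (\<lambda>x. of_int j * Qv a x)) x) = v"
    using mj b by (auto simp: w_def Qv_def fun_eq_iff field_simps)
  ultimately show "v \<in> fvs.span ?S" by simp
qed

lemma R1:
  assumes sub: "A' \<subseteq> A" and hyp: "\<forall>b\<in>A. \<exists>m>0. smul m b \<in> A'"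
  shows "rk A = rk A'"
proof -
  have "Qv ` A \<subseteq> fvs.span (Qv ` A')"
  proof
    fix v assume "v \<in> Qv ` A"
    then obtain b where b: "b \<in> A" "v = Qv b" by auto
    obtain m where m: "m > 0" "smul m b \<in> A'" using hyp b by blast
    have "(\<lambda>x. (1 / of_int m) * Qv (smul m b) x) \<in> fvs.span (Qv ` A')"
      using m by (intro fvs.span_scale fvs.span_base) auto
    moreover have "(\<lambda>x. (1 / of_int m) * Qv (smul m b) x) = v"
      using m b by (auto simp: Qv_def smul_def fun_eq_iff)
    ultimately show "v \<in> fvs.span (Qv ` A')" by simp
  qed
  then have "fvs.span (Qv ` A) \<subseteq> fvs.span (Qv ` A')" by (intro fvs.span_minimal) auto
  moreover have "fvs.span (Qv ` A') \<subseteq> fvs.span (Qv ` A)" using sub by (intro fvs.span_mono) auto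
  ultimately show ?thesis unfolding rk_def by (intro fvs.span_eq_dim) auto
qed

lemma R2:
  assumes sub: "A' \<subseteq> A" and A': "addsub A'" and a: "a \<in> A"
    and D: "finite D" and supp: "\<forall>f\<in>A. \<forall>x. x \<notin> D \<longrightarrow> f x = 0"
    and notin: "\<forall>m>0. smul m a \<notin> A'"
    and hyp: "\<forall>b\<in>A. \<exists>m>0. \<exists>j. (\<lambda>x. m * b x - j * a x) \<in> A'"
  shows "rk A = Suc (rk A')"
proof -
  obtain B where B: "B \<subseteq> Qv ` A'" "fvs.independent B" "Qv ` A' \<subseteq> fvs.span B" "card B = fvs.dim (Qv ` A')"
    using fvs.basis_exists by blast
  have "B \<subseteq> fvs.span (Qv ` A)" using B(1) sub fvs.span_superset[of "Qv ` A"] by blast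
  then have finB: "finite B"
    using L_indep_fin[OF D supp, of B] B(2) by blast
  have nspan: "Qv a \<notin> fvs.span (Qv ` A')"
  proof
    assume "Qv a \<in> fvs.span (Qv ` A')"
    then obtain m w where mw: "m > 0" "w \<in> A'" "Qv w = (\<lambda>x. of_int m * Qv a x)"
      using L_denom[OF A'] by blast
    then have "Qv w = Qv (smul m a)" by (simp add: Qv_smul)
    then have "w = smul m a" by (rule Qv_inj)
    then show False using notin mw by auto
  qed
  have spB: "fvs.span B \<subseteq> fvs.span (Qv ` A')" using B(1) fvs.span_mono by blast
  have nB: "Qv a \<notin> fvs.span B" using nspan spB by blast
  then have nB': "Qv a \<notin> B" using fvs.span_superset[of B] by blast
  have ind: "fvs.independent (insert (Qv a) B)" using fvs.independent_insertI[OF nB B(2)] .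
  have "fvs.span (insert (Qv a) B) = fvs.span (Qv ` A)"
  proof
    show "fvs.span (insert (Qv a) B) \<subseteq> fvs.span (Qv ` A)"
      using B(1) sub a by (intro fvs.span_mono) auto
  next
    have "insert (Qv a) (Qv ` A') \<subseteq> fvs.span (insert (Qv a) B)"
    proof -
      have "Qv ` A' \<subseteq> fvs.span (insert (Qv a) B)"
        using B(3) fvs.span_mono[of B "insert (Qv a) B"] by blast
      then show ?thesis using fvs.span_base by blast
    qed
    then have "fvs.span (insert (Qv a) (Qv ` A')) \<subseteq> fvs.span (insert (Qv a) B)"
      by (intro fvs.span_minimal) auto
    moreover have "Qv ` A \<subseteq> fvs.span (insert (Qv a) (Qv ` A'))"
      using L_span_incl[OF sub hyp] .
    ultimately have "Qv ` A \<subseteq> fvs.span (insert (Qv a) B)" by blast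
    then show "fvs.span (Qv ` A) \<subseteq> fvs.span (insert (Qv a) B)"
      by (intro fvs.span_minimal) auto
  qed
  then have "fvs.dim (Qv ` A) = card (insert (Qv a) B)"
    using fvs.dim_eq_card[OF _ ind] by simp
  also have "\<dots> = Suc (card B)" using finB nB' by simp
  finally show ?thesis using B(4) unfolding rk_def by simp
qed



lemma GG_carrier: "g \<in> carrier (GGamma n E) \<longleftrightarrow>
   (\<forall>i. n \<le> i \<longrightarrow> fst g i = 0) \<and> (\<forall>p. p \<notin> nonedges n E \<longrightarrow> snd g p = 0)"
  by (simp add: GGamma_def)

lemma GG_mult: "g \<otimes>\<^bsub>GGamma n E\<^esub> h = GGamma_mult n E g h"
  by (simp add: GGamma_def)

lemma GG_one: "\<one>\<^bsub>GGamma n E\<^esub> = ((\<lambda>_. 0), (\<lambda>_. 0))"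
  by (simp add: GGamma_def)

lemma group_GG: "group (GGamma n E)"
proof (rule groupI)
  fix x y assume "x \<in> carrier (GGamma n E)" "y \<in> carrier (GGamma n E)"
  then show "x \<otimes>\<^bsub>GGamma n E\<^esub> y \<in> carrier (GGamma n E)"
    by (auto simp: GG_carrier GG_mult GGamma_mult_def)
next
  show "\<one>\<^bsub>GGamma n E\<^esub> \<in> carrier (GGamma n E)" by (simp add: GG_carrier GG_one)
next
  fix x y z
  show "(x \<otimes>\<^bsub>GGamma n E\<^esub> y) \<otimes>\<^bsub>GGamma n E\<^esub> z = x \<otimes>\<^bsub>GGamma n E\<^esub> (y \<otimes>\<^bsub>GGamma n E\<^esub> z)"
    by (auto simp: GG_mult GGamma_mult_def algebra_simps fun_eq_iff)
next
  fix x show "\<one>\<^bsub>GGamma n E\<^esub> \<otimes>\<^bsub>GGamma n E\<^esub> x = x"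
    by (simp add: GGamma_def GGamma_mult_def prod_eq_iff fun_eq_iff)
next
  fix x assume x: "x \<in> carrier (GGamma n E)"
  define y where "y = ((\<lambda>i. - fst x i),
     (\<lambda>p. - snd x p + (if p \<in> nonedges n E then fst x (snd p) * fst x (fst p) else 0)))"
  have "y \<in> carrier (GGamma n E)" using x by (auto simp: y_def GG_carrier)
  moreover have "y \<otimes>\<^bsub>GGamma n E\<^esub> x = \<one>\<^bsub>GGamma n E\<^esub>"
    by (auto simp: y_def GG_mult GG_one GGamma_mult_def fun_eq_iff)
  ultimately show "\<exists>y \<in> carrier (GGamma n E). y \<otimes>\<^bsub>GGamma n E\<^esub> x = \<one>\<^bsub>GGamma n E\<^esub>" by blast
qed



lemma fst_GGm: "fst (GGamma_mult n E x y) = (\<lambda>i. fst x i + fst y i)"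
  by (simp add: GGamma_mult_def)

lemma snd_GGm0: "fst x = (\<lambda>_. 0) \<Longrightarrow> snd (GGamma_mult n E x y) = (\<lambda>p. snd x p + snd y p)"
proof -
  assume a: "fst x = (\<lambda>_. 0)"
  show ?thesis
  proof (rule ext)
    fix p :: "nat \<times> nat"
    have "fst x (snd p) = 0" using a by simp
    then show "snd (GGamma_mult n E x y) p = snd x p + snd y p" by (simp add: GGamma_mult_def)
  qed
qed

context
  fixes M :: "((nat \<Rightarrow> int) \<times> (nat \<times> nat \<Rightarrow> int)) monoid" and n E
  assumes mM: "monoid.mult M = GGamma_mult n E" and oM: "one M = ((\<lambda>_. 0), (\<lambda>_. 0))"
begin

lemma M_fst_pow_nat: "fst (x [^]\<^bsub>M\<^esub> (k::nat)) = smul (int k) (fst x)"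
  by (induction k) (simp_all add: oM mM fst_GGm smul_def fun_eq_iff algebra_simps)

lemma M_Y_pow_nat: "fst x = (\<lambda>_. 0) \<Longrightarrow> snd (x [^]\<^bsub>M\<^esub> (k::nat)) = smul (int k) (snd x)"
proof (induction k)
  case 0 then show ?case by (simp add: oM smul_def)
next
  case (Suc k)
  have "fst (x [^]\<^bsub>M\<^esub> k) = (\<lambda>_. 0)" using M_fst_pow_nat Suc.prems by (simp add: smul_def)
  then show ?case using Suc by (simp add: mM snd_GGm0 smul_def fun_eq_iff algebra_simps)
qed

context
  assumes gM: "group M"
begin

lemma M_fst_inv: "x \<in> carrier M \<Longrightarrow> fst (inv\<^bsub>M\<^esub> x) = (\<lambda>i. - fst x i)"
proof -
  assume x: "x \<in> carrier M"
  have "x \<otimes>\<^bsub>M\<^esub> inv\<^bsub>M\<^esub> x = \<one>\<^bsub>M\<^esub>" using group.r_inv[OF gM x] .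
  then have "fst (GGamma_mult n E x (inv\<^bsub>M\<^esub> x)) = (\<lambda>_. 0)" by (simp add: mM oM)
  then have h: "\<forall>i. fst x i + fst (inv\<^bsub>M\<^esub> x) i = 0" by (simp add: fst_GGm fun_eq_iff)
  show ?thesis
  proof (rule ext)
    fix i show "fst (inv\<^bsub>M\<^esub> x) i = - fst x i" using h[rule_format, of i] by linarith
  qed
qed

lemma M_snd_inv: "x \<in> carrier M \<Longrightarrow> fst x = (\<lambda>_. 0) \<Longrightarrow> snd (inv\<^bsub>M\<^esub> x) = (\<lambda>p. - snd x p)"
proof -
  assume x: "x \<in> carrier M" and f: "fst x = (\<lambda>_. 0)"
  have "x \<otimes>\<^bsub>M\<^esub> inv\<^bsub>M\<^esub> x = \<one>\<^bsub>M\<^esub>" using group.r_inv[OF gM x] .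
  then have "snd (GGamma_mult n E x (inv\<^bsub>M\<^esub> x)) = (\<lambda>_. 0)" by (simp add: mM oM)
  then have h: "\<forall>i. snd x i + snd (inv\<^bsub>M\<^esub> x) i = 0" using f by (simp add: snd_GGm0 fun_eq_iff)
  show ?thesis
  proof (rule ext)
    fix i show "snd (inv\<^bsub>M\<^esub> x) i = - snd x i" using h[rule_format, of i] by linarith
  qed
qed

lemma M_fst_pow: "x \<in> carrier M \<Longrightarrow> fst (x [^]\<^bsub>M\<^esub> (k::int)) = smul k (fst x)"
proof -
  assume x: "x \<in> carrier M"
  have e: "x [^]\<^bsub>M\<^esub> k = (if k < 0 then inv\<^bsub>M\<^esub> (x [^]\<^bsub>M\<^esub> (nat (-k))) else x [^]\<^bsub>M\<^esub> (nat k))"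
    by (rule int_pow_def2)
  show ?thesis
  proof (cases "k < 0")
    case True
    have "fst (x [^]\<^bsub>M\<^esub> k) = fst (inv\<^bsub>M\<^esub> (x [^]\<^bsub>M\<^esub> (nat (-k))))"
      using True e by presburger
    also have "\<dots> = (\<lambda>i. - fst (x [^]\<^bsub>M\<^esub> (nat (-k))) i)"
      by (rule M_fst_inv) (rule monoid.nat_pow_closed[OF group.is_monoid[OF gM] x])
    also have "\<dots> = smul k (fst x)" using True unfolding M_fst_pow_nat smul_def by auto
    finally show ?thesis .
  next
    case False
    then have "x [^]\<^bsub>M\<^esub> k = x [^]\<^bsub>M\<^esub> (nat k)" using e by presburger
    then have "fst (x [^]\<^bsub>M\<^esub> k) = smul (int (nat k)) (fst x)" by (simp only: M_fst_pow_nat)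
    then show ?thesis using False by (simp add: smul_def)
  qed
qed

lemma M_snd_pow: "x \<in> carrier M \<Longrightarrow> fst x = (\<lambda>_. 0) \<Longrightarrow> snd (x [^]\<^bsub>M\<^esub> (k::int)) = smul k (snd x)"
proof -
  assume x: "x \<in> carrier M" and f: "fst x = (\<lambda>_. 0)"
  have e: "x [^]\<^bsub>M\<^esub> k = (if k < 0 then inv\<^bsub>M\<^esub> (x [^]\<^bsub>M\<^esub> (nat (-k))) else x [^]\<^bsub>M\<^esub> (nat k))"
    by (rule int_pow_def2)
  show ?thesis
  proof (cases "k < 0")
    case True
    have c: "x [^]\<^bsub>M\<^esub> (nat (-k)) \<in> carrier M" by (rule monoid.nat_pow_closed[OF group.is_monoid[OF gM] x])
    have f2: "fst (x [^]\<^bsub>M\<^esub> (nat (-k))) = (\<lambda>_. 0)" unfolding M_fst_pow_nat f smul_def by simp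
    have "snd (x [^]\<^bsub>M\<^esub> k) = snd (inv\<^bsub>M\<^esub> (x [^]\<^bsub>M\<^esub> (nat (-k))))"
      using True e by presburger
    also have "\<dots> = (\<lambda>i. - snd (x [^]\<^bsub>M\<^esub> (nat (-k))) i)"
      by (rule M_snd_inv[OF c f2])
    also have "\<dots> = smul k (snd x)" using True unfolding M_Y_pow_nat[OF f] smul_def by auto
    finally show ?thesis .
  next
    case False
    then have "x [^]\<^bsub>M\<^esub> k = x [^]\<^bsub>M\<^esub> (nat k)" using e by presburger
    then have "snd (x [^]\<^bsub>M\<^esub> k) = smul (int (nat k)) (snd x)" by (simp only: M_Y_pow_nat[OF f])
    then show ?thesis using False by (simp add: smul_def)
  qed
qed

end
end



lemma (in group) cyc_inf_pow:
  assumes Xg: "Xg \<in> carrier G" and c: "carrier G = range (\<lambda>k::int. Xg [^] k)"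
    and inf: "infinite (carrier G)" and j: "j \<noteq> 0"
  shows "Xg [^] (j::int) \<noteq> \<one>"
proof
  assume e: "Xg [^] j = \<one>"
  define p where "p = \<bar>j\<bar>"
  have p: "p > 0" using j by (simp add: p_def)
  have ep: "Xg [^] p = \<one>"
  proof (cases "j < 0")
    case True then have "p = - j" by (simp add: p_def)
    then show ?thesis using int_pow_neg[OF Xg, of j] e by simp
  next
    case False then show ?thesis using e by (simp add: p_def)
  qed
  have "carrier G \<subseteq> (\<lambda>k. Xg [^] k) ` {0..<p}"
  proof
    fix y assume "y \<in> carrier G"
    then have "y \<in> range (\<lambda>k::int. Xg [^] k)" using c by simp
    then obtain k :: int where y: "y = Xg [^] k" by blast
    have e1: "Xg [^] k = Xg [^] (p * (k div p) + k mod p)" by (simp only: mult_div_mod_eq)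
    have e2: "Xg [^] (p * (k div p) + k mod p) = Xg [^] (p * (k div p)) \<otimes> Xg [^] (k mod p)"
      by (rule int_pow_mult[OF Xg])
    have e3: "Xg [^] (p * (k div p)) = (Xg [^] p) [^] (k div p)" by (rule int_pow_pow[OF Xg, symmetric])
    have e4: "(Xg [^] p) [^] (k div p) = \<one>" unfolding ep by (rule int_pow_one)
    have e5: "\<one> \<otimes> Xg [^] (k mod p) = Xg [^] (k mod p)" by (rule l_one) (rule int_pow_closed[OF Xg])
    have "Xg [^] k = Xg [^] (k mod p)" unfolding e1 e2 e3 e4 e5 ..
    then have "y = Xg [^] (k mod p)" using y by simp
    moreover have "k mod p \<in> {0..<p}" using p by simp
    ultimately show "y \<in> (\<lambda>k. Xg [^] k) ` {0..<p}" by blast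
  qed
  then have "finite (carrier G)" by (rule finite_subset) simp
  then show False using inf by simp
qed

definition hrk :: "((nat \<Rightarrow> int) \<times> (nat \<times> nat \<Rightarrow> int)) set \<Rightarrow> nat" where
  "hrk K = rk (fst ` K) + rk (snd ` {g \<in> K. fst g = (\<lambda>_. 0)})"

lemma GG_m: "monoid.mult (GGamma n E) = GGamma_mult n E" by (simp add: GGamma_def)
lemma GG_o: "one (GGamma n E) = ((\<lambda>_. 0), (\<lambda>_. 0))" by (simp add: GGamma_def)

lemma addsub_fst:
  assumes K: "subgroup K (GGamma n E)" shows "addsub (fst ` K)"
proof -
  interpret G: group "GGamma n E" by (rule group_GG)
  interpret K: subgroup K "GGamma n E" by (rule K)
  have "(\<lambda>_. 0) = fst (\<one>\<^bsub>GGamma n E\<^esub>)" by (simp add: GG_one)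
  then have 1: "(\<lambda>_. 0) \<in> fst ` K" using K.one_closed by (rule image_eqI)
  have 2: "(\<lambda>x. a x + b x) \<in> fst ` K" if ab: "a \<in> fst ` K" "b \<in> fst ` K" for a b
  proof -
    obtain x where x: "a = fst x" "x \<in> K" using ab(1) by (rule imageE)
    obtain y where y: "b = fst y" "y \<in> K" using ab(2) by (rule imageE)
    have xy: "x \<in> K" "y \<in> K" "a = fst x" "b = fst y" using x y by auto
    have "(\<lambda>i. a i + b i) = fst (x \<otimes>\<^bsub>GGamma n E\<^esub> y)" using xy by (simp add: GG_mult fst_GGm)
    then show ?thesis using K.m_closed[OF xy(1,2)] by (rule image_eqI)
  qed
  have 3: "(\<lambda>x. - a x) \<in> fst ` K" if ab: "a \<in> fst ` K" for a
  proof -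
    obtain x where xo: "a = fst x" "x \<in> K" using ab by (rule imageE)
    have x: "x \<in> K" "a = fst x" using xo by auto
    have xc: "x \<in> carrier (GGamma n E)" using x K.subset by blast
    have "fst (inv\<^bsub>GGamma n E\<^esub> x) = (\<lambda>i. - fst x i)"
      by (rule M_fst_inv[OF GG_m GG_o group_GG xc])
    then have "(\<lambda>i. - a i) = fst (inv\<^bsub>GGamma n E\<^esub> x)" using x by simp
    then show ?thesis using K.m_inv_closed[OF x(1)] by (rule image_eqI)
  qed
  show ?thesis unfolding addsub_def using 1 2 3 by blast
qed

lemma addsub_snd:
  assumes K: "subgroup K (GGamma n E)" shows "addsub (snd ` {g \<in> K. fst g = (\<lambda>_. 0)})"
proof -
  interpret G: group "GGamma n E" by (rule group_GG)
  interpret K: subgroup K "GGamma n E" by (rule K)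
  have "(\<lambda>_. 0) = snd (\<one>\<^bsub>GGamma n E\<^esub>)" by (simp add: GG_one)
  moreover have "\<one>\<^bsub>GGamma n E\<^esub> \<in> {g \<in> K. fst g = (\<lambda>_. 0)}" using K.one_closed by (simp add: GG_one)
  ultimately have 1: "(\<lambda>_. 0) \<in> snd ` {g \<in> K. fst g = (\<lambda>_. 0)}" by (rule image_eqI)
  have 2: "(\<lambda>x. a x + b x) \<in> snd ` {g \<in> K. fst g = (\<lambda>_. 0)}"
    if ab: "a \<in> snd ` {g \<in> K. fst g = (\<lambda>_. 0)}" "b \<in> snd ` {g \<in> K. fst g = (\<lambda>_. 0)}" for a b
  proof -
    obtain x where xo: "a = snd x" "x \<in> {g \<in> K. fst g = (\<lambda>_. 0)}" using ab(1) by (rule imageE)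
    obtain y where yo: "b = snd y" "y \<in> {g \<in> K. fst g = (\<lambda>_. 0)}" using ab(2) by (rule imageE)
    have x: "x \<in> K" "a = snd x" "fst x = (\<lambda>_. 0)" using xo by auto
    have y: "y \<in> K" "b = snd y" "fst y = (\<lambda>_. 0)" using yo by auto
    have "x \<otimes>\<^bsub>GGamma n E\<^esub> y \<in> K" using K.m_closed x y by blast
    moreover have "fst (x \<otimes>\<^bsub>GGamma n E\<^esub> y) = (\<lambda>_. 0)" using x y by (simp add: GG_mult fst_GGm)
    ultimately have m: "x \<otimes>\<^bsub>GGamma n E\<^esub> y \<in> {g \<in> K. fst g = (\<lambda>_. 0)}" by simp
    have "(\<lambda>i. a i + b i) = snd (x \<otimes>\<^bsub>GGamma n E\<^esub> y)" using x y by (simp add: GG_mult snd_GGm0)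
    then show ?thesis using m by (rule image_eqI)
  qed
  have 3: "(\<lambda>x. - a x) \<in> snd ` {g \<in> K. fst g = (\<lambda>_. 0)}" if ab: "a \<in> snd ` {g \<in> K. fst g = (\<lambda>_. 0)}" for a
  proof -
    obtain x where xo: "a = snd x" "x \<in> {g \<in> K. fst g = (\<lambda>_. 0)}" using ab by (rule imageE)
    have x: "x \<in> K" "a = snd x" "fst x = (\<lambda>_. 0)" using xo by auto
    have xc: "x \<in> carrier (GGamma n E)" using x K.subset by blast
    have "fst (inv\<^bsub>GGamma n E\<^esub> x) = (\<lambda>i. - fst x i)"
      by (rule M_fst_inv[OF GG_m GG_o group_GG xc])
    then have "fst (inv\<^bsub>GGamma n E\<^esub> x) = (\<lambda>_. 0)" using x by simp
    then have m: "inv\<^bsub>GGamma n E\<^esub> x \<in> {g \<in> K. fst g = (\<lambda>_. 0)}" using K.m_inv_closed[OF x(1)] by simp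
    have "snd (inv\<^bsub>GGamma n E\<^esub> x) = (\<lambda>i. - snd x i)"
      by (rule M_snd_inv[OF GG_m GG_o group_GG xc x(3)])
    then have "(\<lambda>i. - a i) = snd (inv\<^bsub>GGamma n E\<^esub> x)" using x by simp
    then show ?thesis using m by (rule image_eqI)
  qed
  show ?thesis unfolding addsub_def using 1 2 3 by blast
qed

lemma finite_nonedges: "finite (nonedges n E)"
proof (rule finite_subset)
  show "nonedges n E \<subseteq> {0..<n} \<times> {0..<n}" unfolding nonedges_def by auto
qed simp

lemma supp_fst: assumes K: "subgroup K (GGamma n E)" shows "\<forall>f\<in>fst ` K. \<forall>x. x \<notin> {0..<n} \<longrightarrow> f x = 0"
proof (intro ballI allI impI)
  fix f x assume "f \<in> fst ` K" "x \<notin> {0..<n}"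
  then obtain g where g: "g \<in> K" "f = fst g" by auto
  then have "g \<in> carrier (GGamma n E)" using subgroup.subset[OF K] by blast
  then show "f x = 0" using g \<open>x \<notin> {0..<n}\<close> unfolding GG_carrier by simp
qed

lemma supp_snd: assumes K: "subgroup K (GGamma n E)" shows
   "\<forall>f\<in>snd ` {g \<in> K. fst g = (\<lambda>_. 0)}. \<forall>x. x \<notin> nonedges n E \<longrightarrow> f x = 0"
proof (intro ballI allI impI)
  fix f x assume "f \<in> snd ` {g \<in> K. fst g = (\<lambda>_. 0)}" "x \<notin> nonedges n E"
  then obtain g where g: "g \<in> K" "f = snd g" by auto
  then have "g \<in> carrier (GGamma n E)" using subgroup.subset[OF K] by blast
  then show "f x = 0" using g \<open>x \<notin> nonedges n E\<close> unfolding GG_carrier by (cases x) simp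
qed



lemma step_lemma:
  fixes K K' :: "((nat \<Rightarrow> int) \<times> (nat \<times> nat \<Rightarrow> int)) set"
  assumes K: "subgroup K (GGamma n E)" and K': "subgroup K' (GGamma n E)" and sub: "K' \<subseteq> K"
    and nor: "K' \<lhd> (GGamma n E\<lparr>carrier := K\<rparr>)"
    and cyc: "cyclic_group ((GGamma n E\<lparr>carrier := K\<rparr>) Mod K')"
  shows "hrk K = hrk K' + (if infinite (carrier ((GGamma n E\<lparr>carrier := K\<rparr>) Mod K')) then 1 else 0)"
proof -
  let ?G = "GGamma n E"
  let ?GK = "GGamma n E\<lparr>carrier := K\<rparr>"
  let ?Q = "?GK Mod K'"
  have gG: "group ?G" by (rule group_GG)
  have gGK: "group ?GK" by (rule subgroup.subgroup_is_group[OF K gG])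
  interpret GK: group ?GK by (rule gGK)
  interpret N: normal K' ?GK by (rule nor)
  have gQ: "group ?Q" by (rule N.factorgroup_is_group)
  interpret Q: group ?Q by (rule gQ)
  define \<phi> where "\<phi> = (\<lambda>x. K' #>\<^bsub>?GK\<^esub> x)"
  have hom: "\<phi> \<in> hom ?GK ?Q" unfolding \<phi>_def by (rule N.r_coset_hom_Mod)
  interpret h: group_hom ?GK ?Q \<phi>
    by (simp add: group_hom_def group_hom_axioms_def gGK gQ hom)
  have mGK: "monoid.mult ?GK = GGamma_mult n E" by (simp add: GGamma_def)
  have oGK: "one ?GK = ((\<lambda>_. 0), (\<lambda>_. 0))" by (simp add: GGamma_def)
  have K'GK: "subgroup K' ?GK" by (rule normal_imp_subgroup[OF nor])
  have k1: "\<phi> x = K' \<longleftrightarrow> x \<in> K'" if x: "x \<in> K" for x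
  proof
    assume e: "\<phi> x = K'"
    have "x \<in> K' #>\<^bsub>?GK\<^esub> x" using GK.rcos_self[of x K'] x K'GK by simp
    then show "x \<in> K'" using e unfolding \<phi>_def by simp
  next
    assume "x \<in> K'"
    then show "\<phi> x = K'" unfolding \<phi>_def by (rule N.rcos_const[OF gGK])
  qed
  have oQ: "one ?Q = K'" by simp
  have cQ: "carrier ?Q = \<phi> ` K" unfolding \<phi>_def using carrier_FactGroup[of ?GK K'] by simp
  have fpow: "fst (x [^]\<^bsub>?GK\<^esub> (k::int)) = smul k (fst x)" if "x \<in> K" for x k
    using M_fst_pow[OF mGK oGK gGK] that by simp
  have fpown: "fst (x [^]\<^bsub>?GK\<^esub> (k::nat)) = smul (int k) (fst x)" for x k
    using M_fst_pow_nat[OF mGK oGK] by simp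
  have spow: "snd (x [^]\<^bsub>?GK\<^esub> (k::int)) = smul k (snd x)" if "x \<in> K" "fst x = (\<lambda>_. 0)" for x k
    using M_snd_pow[OF mGK oGK gGK] that by simp
  have spown: "snd (x [^]\<^bsub>?GK\<^esub> (k::nat)) = smul (int k) (snd x)" if "fst x = (\<lambda>_. 0)" for x k
    using M_Y_pow_nat[OF mGK oGK] that by simp
  have finv: "fst (inv\<^bsub>?GK\<^esub> x) = (\<lambda>i. - fst x i)" if "x \<in> K" for x
    using M_fst_inv[OF mGK oGK gGK] that by simp
  have sinv: "snd (inv\<^bsub>?GK\<^esub> x) = (\<lambda>i. - snd x i)" if "x \<in> K" "fst x = (\<lambda>_. 0)" for x
    using M_snd_inv[OF mGK oGK gGK] that by simp
  have fmul: "fst (x \<otimes>\<^bsub>?GK\<^esub> y) = (\<lambda>i. fst x i + fst y i)" for x y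
    by (simp add: mGK fst_GGm)
  have smul0: "snd (x \<otimes>\<^bsub>?GK\<^esub> y) = (\<lambda>i. snd x i + snd y i)" if "fst x = (\<lambda>_. 0)" for x y
    using that by (simp add: mGK snd_GGm0)
  have AF: "addsub (fst ` K')" by (rule addsub_fst[OF K'])
  have AS: "addsub (snd ` {g \<in> K'. fst g = (\<lambda>_. 0)})" by (rule addsub_snd[OF K'])
  have subF: "fst ` K' \<subseteq> fst ` K" using sub by blast
  have subS: "snd ` {g \<in> K'. fst g = (\<lambda>_. 0)} \<subseteq> snd ` {g \<in> K. fst g = (\<lambda>_. 0)}" using sub by blast
  show ?thesis
  proof (cases "finite (carrier ?Q)")
    case True
    define m where "m = order ?Q"
    have m0: "m > 0" using True Q.order_gt_0_iff_finite m_def by simp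
    have pm: "x [^]\<^bsub>?GK\<^esub> m \<in> K'" if x: "x \<in> K" for x
    proof -
      have xc: "x \<in> carrier ?GK" using x by simp
      have "\<phi> (x [^]\<^bsub>?GK\<^esub> m) = (\<phi> x) [^]\<^bsub>?Q\<^esub> m" by (rule h.hom_nat_pow[OF xc])
      also have "\<dots> = \<one>\<^bsub>?Q\<^esub>" unfolding m_def by (rule Q.pow_order_eq_1) (rule h.hom_closed[OF xc])
      finally have "\<phi> (x [^]\<^bsub>?GK\<^esub> m) = K'" by simp
      moreover have "x [^]\<^bsub>?GK\<^esub> m \<in> K" using GK.nat_pow_closed[OF xc] by simp
      ultimately show ?thesis using k1 by blast
    qed
    have "rk (fst ` K) = rk (fst ` K')"
    proof (rule R1[OF subF], intro ballI)
      fix b assume "b \<in> fst ` K"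
      then obtain x where x: "b = fst x" "x \<in> K" by (rule imageE)
      have "smul (int m) b = fst (x [^]\<^bsub>?GK\<^esub> m)" using fpown x by simp
      then have "smul (int m) b \<in> fst ` K'" using pm[OF x(2)] by (rule image_eqI)
      then show "\<exists>m>0. smul m b \<in> fst ` K'" using m0 by (intro exI[of _ "int m"]) simp
    qed
    moreover have "rk (snd ` {g \<in> K. fst g = (\<lambda>_. 0)}) = rk (snd ` {g \<in> K'. fst g = (\<lambda>_. 0)})"
    proof (rule R1[OF subS], intro ballI)
      fix b assume "b \<in> snd ` {g \<in> K. fst g = (\<lambda>_. 0)}"
      then obtain x where x: "b = snd x" "x \<in> {g \<in> K. fst g = (\<lambda>_. 0)}" by (rule imageE)
      have "smul (int m) b = snd (x [^]\<^bsub>?GK\<^esub> m)" using spown x by simp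
      moreover have "x [^]\<^bsub>?GK\<^esub> m \<in> {g \<in> K'. fst g = (\<lambda>_. 0)}"
        using pm x fpown[of x m] by (simp add: smul_def)
      ultimately have "smul (int m) b \<in> snd ` {g \<in> K'. fst g = (\<lambda>_. 0)}" by (rule image_eqI)
      then show "\<exists>m>0. smul m b \<in> snd ` {g \<in> K'. fst g = (\<lambda>_. 0)}" using m0 by (intro exI[of _ "int m"]) simp
    qed
    ultimately show ?thesis using True unfolding hrk_def by simp
  next
    case False
    obtain Xg where X: "Xg \<in> carrier ?Q" "carrier ?Q = range (\<lambda>k::int. Xg [^]\<^bsub>?Q\<^esub> k)"
      using cyc Q.cyclic_group by blast
    have "Xg \<in> \<phi> ` K" using X(1) cQ by simp
    then obtain g where g: "Xg = \<phi> g" "g \<in> K" by (rule imageE)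
    have gc: "g \<in> carrier ?GK" using g by simp
    have Xpow: "\<phi> (g [^]\<^bsub>?GK\<^esub> k) = Xg [^]\<^bsub>?Q\<^esub> k" for k :: int
      using h.hom_int_pow[OF gc] g by simp
    have nz: "Xg [^]\<^bsub>?Q\<^esub> k \<noteq> K'" if "k \<noteq> 0" for k :: int
      using Q.cyc_inf_pow[OF X(1) X(2) False that] by simp
    have repr: "\<exists>k::int. \<phi> x = Xg [^]\<^bsub>?Q\<^esub> k" if "x \<in> K" for x
    proof -
      have "\<phi> x \<in> carrier ?Q" using that cQ by blast
      then show ?thesis using X(2) by auto
    qed
    have k3: "x \<otimes>\<^bsub>?GK\<^esub> inv\<^bsub>?GK\<^esub> y \<in> K'" if "x \<in> K" "y \<in> K" "\<phi> x = \<phi> y" for x y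
    proof -
      have xc: "x \<in> carrier ?GK" and yc: "y \<in> carrier ?GK" using that by auto
      have "\<phi> (x \<otimes>\<^bsub>?GK\<^esub> inv\<^bsub>?GK\<^esub> y) = \<phi> x \<otimes>\<^bsub>?Q\<^esub> \<phi> (inv\<^bsub>?GK\<^esub> y)"
        by (rule h.hom_mult[OF xc GK.inv_closed[OF yc]])
      also have "\<phi> (inv\<^bsub>?GK\<^esub> y) = inv\<^bsub>?Q\<^esub> (\<phi> y)" by (rule h.hom_inv[OF yc])
      also have "\<phi> x \<otimes>\<^bsub>?Q\<^esub> inv\<^bsub>?Q\<^esub> (\<phi> y) = \<one>\<^bsub>?Q\<^esub>"
        unfolding that(3) by (rule Q.r_inv[OF h.hom_closed[OF yc]])
      finally have "\<phi> (x \<otimes>\<^bsub>?GK\<^esub> inv\<^bsub>?GK\<^esub> y) = K'" by simp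
      moreover have "x \<otimes>\<^bsub>?GK\<^esub> inv\<^bsub>?GK\<^esub> y \<in> K" using GK.m_closed[OF xc GK.inv_closed[OF yc]] by simp
      ultimately show ?thesis using k1 by blast
    qed
    have cK: "carrier ?GK = K" by simp
    have K'cl: "x \<otimes>\<^bsub>?GK\<^esub> y \<in> K'" if "x \<in> K'" "y \<in> K'" for x y using N.m_closed[OF that] .
    have K'inv: "inv\<^bsub>?GK\<^esub> x \<in> K'" if "x \<in> K'" for x using N.m_inv_closed[OF that] .
    have K'pow: "x [^]\<^bsub>?GK\<^esub> (k::int) \<in> K'" if "x \<in> K'" for x k
      using GK.subgroup_int_pow_closed[OF K'GK that] .
    have Kcl: "x \<otimes>\<^bsub>?GK\<^esub> y \<in> K" if "x \<in> K" "y \<in> K" for x y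
      using GK.m_closed[of x y] that unfolding cK .
    have Kinv: "inv\<^bsub>?GK\<^esub> x \<in> K" if "x \<in> K" for x using GK.inv_closed[of x] that unfolding cK .
    have Kpow: "x [^]\<^bsub>?GK\<^esub> (k::int) \<in> K" if "x \<in> K" for x k using GK.int_pow_closed[of x k] that unfolding cK .
    have inK: "x \<in> carrier ?GK" if "x \<in> K" for x using that by simp
    have infQ: "infinite (carrier ?Q)" using False .
    have fdiff: "fst (x \<otimes>\<^bsub>?GK\<^esub> inv\<^bsub>?GK\<^esub> (g [^]\<^bsub>?GK\<^esub> k)) = (\<lambda>i. fst x i - k * fst g i)"
      if "x \<in> K" for x and k :: int
      unfolding fmul finv[OF Kpow[OF g(2)]] fpow[OF g(2)] by (simp add: smul_def)
    have ediff: "x \<otimes>\<^bsub>?GK\<^esub> inv\<^bsub>?GK\<^esub> (g [^]\<^bsub>?GK\<^esub> k) \<in> K'"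
      if "x \<in> K" "\<phi> x = Xg [^]\<^bsub>?Q\<^esub> k" for x and k :: int
    proof -
      have "\<phi> x = \<phi> (g [^]\<^bsub>?GK\<^esub> k)" using that(2) Xpow[of k] by simp
      then show ?thesis by (rule k3[OF that(1) Kpow[OF g(2)]])
    qed
    show ?thesis
    proof (cases "\<exists>m>0. smul m (fst g) \<in> fst ` K'")
      case False
      have "rk (fst ` K) = Suc (rk (fst ` K'))"
      proof (rule R2[OF subF AF _ _ supp_fst[OF K]])
        show "fst g \<in> fst ` K" using g(2) by (rule imageI)
        show "finite {0..<n}" by simp
        show "\<forall>m>0. smul m (fst g) \<notin> fst ` K'" using False by blast
        show "\<forall>b\<in>fst ` K. \<exists>m>0. \<exists>j. (\<lambda>x. m * b x - j * fst g x) \<in> fst ` K'"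
        proof
          fix b assume "b \<in> fst ` K"
          then obtain x where x: "b = fst x" "x \<in> K" by (rule imageE)
          obtain k :: int where k: "\<phi> x = Xg [^]\<^bsub>?Q\<^esub> k" using repr[OF x(2)] by blast
          have e: "x \<otimes>\<^bsub>?GK\<^esub> inv\<^bsub>?GK\<^esub> (g [^]\<^bsub>?GK\<^esub> k) \<in> K'" by (rule ediff[OF x(2) k])
          have "(\<lambda>i. 1 * b i - k * fst g i) = fst (x \<otimes>\<^bsub>?GK\<^esub> inv\<^bsub>?GK\<^esub> (g [^]\<^bsub>?GK\<^esub> k))"
            unfolding fdiff[OF x(2)] x(1) by simp
          then have "(\<lambda>i. 1 * b i - k * fst g i) \<in> fst ` K'" using e by (rule image_eqI)
          then show "\<exists>m>0. \<exists>j. (\<lambda>i. m * b i - j * fst g i) \<in> fst ` K'"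
            by (intro exI[of _ "1::int"] exI[of _ k] conjI) simp_all
        qed
      qed
      moreover have "{x \<in> K. fst x = (\<lambda>_. 0)} = {x \<in> K'. fst x = (\<lambda>_. 0)}"
      proof
        show "{x \<in> K'. fst x = (\<lambda>_. 0)} \<subseteq> {x \<in> K. fst x = (\<lambda>_. 0)}" using sub by blast
      next
        show "{x \<in> K. fst x = (\<lambda>_. 0)} \<subseteq> {x \<in> K'. fst x = (\<lambda>_. 0)}"
        proof (rule subsetI)
          fix x assume "x \<in> {x \<in> K. fst x = (\<lambda>_. 0)}"
          then have x: "x \<in> K" "fst x = (\<lambda>_. 0)" by auto
          obtain k :: int where k: "\<phi> x = Xg [^]\<^bsub>?Q\<^esub> k" using repr[OF x(1)] by blast
          let ?e = "x \<otimes>\<^bsub>?GK\<^esub> inv\<^bsub>?GK\<^esub> (g [^]\<^bsub>?GK\<^esub> k)"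
          have e: "?e \<in> K'" by (rule ediff[OF x(1) k])
          have fe: "fst ?e = smul (-k) (fst g)"
            unfolding fdiff[OF x(1)] x(2) by (simp add: smul_def)
          have fie: "fst (inv\<^bsub>?GK\<^esub> ?e) = smul k (fst g)"
            unfolding finv[OF Kcl[OF x(1) Kinv[OF Kpow[OF g(2)]]]] fe by (simp add: smul_def)
          have k0: "k = 0"
          proof (rule ccontr)
            assume "k \<noteq> 0"
            then consider "k > 0" | "-k > 0" by linarith
            then show False
            proof cases
              case 1
              have "smul k (fst g) \<in> fst ` K'" using fie[symmetric] K'inv[OF e] by (rule image_eqI)
              then show False using False 1 by blast
            next
              case 2
              have "smul (-k) (fst g) \<in> fst ` K'" using fe[symmetric] e by (rule image_eqI)
              then show False using False 2 by blast
            qed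
          qed
          have "?e = x \<otimes>\<^bsub>?GK\<^esub> inv\<^bsub>?GK\<^esub> \<one>\<^bsub>?GK\<^esub>" using k0 by (simp only: int_pow_0)
          also have "\<dots> = x \<otimes>\<^bsub>?GK\<^esub> \<one>\<^bsub>?GK\<^esub>" by (simp only: GK.inv_one)
          also have "\<dots> = x" by (rule GK.r_one[OF inK[OF x(1)]])
          finally have "?e = x" .
          then show "x \<in> {x \<in> K'. fst x = (\<lambda>_. 0)}" using e x(2) by simp
        qed
      qed
      ultimately show ?thesis using infQ unfolding hrk_def by simp
    next
      case True
      then obtain m h0 where mh: "m > 0" "h0 \<in> K'" "smul m (fst g) = fst h0" by blast
      have h0K: "h0 \<in> K" using mh sub by blast
      have h0i: "\<forall>i. fst h0 i = m * fst g i" using mh(3) by (simp add: smul_def fun_eq_iff)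
      have "rk (fst ` K) = rk (fst ` K')"
      proof (rule R1[OF subF], intro ballI)
        fix b assume "b \<in> fst ` K"
        then obtain x where x: "b = fst x" "x \<in> K" by (rule imageE)
        obtain k :: int where k: "\<phi> x = Xg [^]\<^bsub>?Q\<^esub> k" using repr[OF x(2)] by blast
        let ?e = "x \<otimes>\<^bsub>?GK\<^esub> inv\<^bsub>?GK\<^esub> (g [^]\<^bsub>?GK\<^esub> k)"
        have e: "?e \<in> K'" by (rule ediff[OF x(2) k])
        have eK: "?e \<in> K" using e sub by blast
        have w: "?e [^]\<^bsub>?GK\<^esub> m \<otimes>\<^bsub>?GK\<^esub> h0 [^]\<^bsub>?GK\<^esub> k \<in> K'"
          by (rule K'cl[OF K'pow[OF e] K'pow[OF mh(2)]])
        have "fst (?e [^]\<^bsub>?GK\<^esub> m \<otimes>\<^bsub>?GK\<^esub> h0 [^]\<^bsub>?GK\<^esub> k) = smul m b"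
          unfolding fmul fpow[OF eK] fpow[OF h0K] finv[OF Kpow[OF g(2)]] fpow[OF g(2)] x(1)
          by (simp add: smul_def h0i fun_eq_iff algebra_simps)
        then have "smul m b \<in> fst ` K'" using w by (metis image_eqI)
        then show "\<exists>m>0. smul m b \<in> fst ` K'" using mh(1) by blast
      qed
      moreover have "rk (snd ` {g \<in> K. fst g = (\<lambda>_. 0)}) = Suc (rk (snd ` {g \<in> K'. fst g = (\<lambda>_. 0)}))"
      proof -
        define y0 where "y0 = inv\<^bsub>?GK\<^esub> h0 \<otimes>\<^bsub>?GK\<^esub> g [^]\<^bsub>?GK\<^esub> m"
        have y0K: "y0 \<in> K" unfolding y0_def by (rule Kcl[OF Kinv[OF h0K] Kpow[OF g(2)]])
        have fy0: "fst y0 = (\<lambda>_. 0)" unfolding y0_def fmul finv[OF h0K] fpow[OF g(2)]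
          by (simp add: smul_def h0i)
        have py0: "\<phi> y0 = Xg [^]\<^bsub>?Q\<^esub> m"
        proof -
          have "\<phi> y0 = \<phi> (inv\<^bsub>?GK\<^esub> h0) \<otimes>\<^bsub>?Q\<^esub> \<phi> (g [^]\<^bsub>?GK\<^esub> m)"
            unfolding y0_def by (rule h.hom_mult[OF inK[OF Kinv[OF h0K]] inK[OF Kpow[OF g(2)]]])
          also have "\<dots> = \<one>\<^bsub>?Q\<^esub> \<otimes>\<^bsub>?Q\<^esub> Xg [^]\<^bsub>?Q\<^esub> m"
          proof -
            have "\<phi> (inv\<^bsub>?GK\<^esub> h0) = \<one>\<^bsub>?Q\<^esub>" using k1[OF Kinv[OF h0K]] K'inv[OF mh(2)] by simp
            then show ?thesis using Xpow[of m] by simp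
          qed
          also have "\<dots> = Xg [^]\<^bsub>?Q\<^esub> m" by (rule Q.l_one[OF Q.int_pow_closed[OF X(1)]])
          finally show ?thesis .
        qed
        have py0pow: "\<phi> (y0 [^]\<^bsub>?GK\<^esub> l) = Xg [^]\<^bsub>?Q\<^esub> (m * l)" for l :: int
        proof -
          have "\<phi> (y0 [^]\<^bsub>?GK\<^esub> l) = (\<phi> y0) [^]\<^bsub>?Q\<^esub> l" by (rule h.hom_int_pow[OF inK[OF y0K]])
          also have "\<dots> = Xg [^]\<^bsub>?Q\<^esub> (m * l)" unfolding py0 by (rule Q.int_pow_pow[OF X(1)])
          finally show ?thesis .
        qed
        show ?thesis
        proof (rule R2[OF subS AS _ finite_nonedges supp_snd[OF K]])
          show "snd y0 \<in> snd ` {g \<in> K. fst g = (\<lambda>_. 0)}" using y0K fy0 by blast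
          show "\<forall>l>0. smul l (snd y0) \<notin> snd ` {g \<in> K'. fst g = (\<lambda>_. 0)}"
          proof (intro allI impI notI)
            fix l :: int assume l: "l > 0" and lin: "smul l (snd y0) \<in> snd ` {g \<in> K'. fst g = (\<lambda>_. 0)}"
            from lin obtain w where w: "smul l (snd y0) = snd w" "w \<in> {g \<in> K'. fst g = (\<lambda>_. 0)}" by (rule imageE)
            have "y0 [^]\<^bsub>?GK\<^esub> l = w"
            proof (rule prod_eqI)
              show "fst (y0 [^]\<^bsub>?GK\<^esub> l) = fst w" unfolding fpow[OF y0K] fy0 using w(2) by (simp add: smul_def)
              show "snd (y0 [^]\<^bsub>?GK\<^esub> l) = snd w" unfolding spow[OF y0K fy0] using w(1) .
            qed
            then have "\<phi> (y0 [^]\<^bsub>?GK\<^esub> l) = K'" using k1[OF Kpow[OF y0K], of l] w(2) by simp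
            then have "Xg [^]\<^bsub>?Q\<^esub> (m * l) = K'" unfolding py0pow .
            moreover have "m * l \<noteq> 0" using l mh(1) by simp
            ultimately show False using nz by blast
          qed
          show "\<forall>b\<in>snd ` {g \<in> K. fst g = (\<lambda>_. 0)}. \<exists>m>0. \<exists>j. (\<lambda>x. m * b x - j * snd y0 x) \<in> snd ` {g \<in> K'. fst g = (\<lambda>_. 0)}"
          proof
            fix b assume "b \<in> snd ` {g \<in> K. fst g = (\<lambda>_. 0)}"
            then obtain w where wo: "b = snd w" "w \<in> {g \<in> K. fst g = (\<lambda>_. 0)}" by (rule imageE)
            then have w: "b = snd w" "w \<in> K" "fst w = (\<lambda>_. 0)" by auto
            obtain j :: int where j: "\<phi> w = Xg [^]\<^bsub>?Q\<^esub> j" using repr[OF w(2)] by blast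
            have "\<phi> (w [^]\<^bsub>?GK\<^esub> m) = Xg [^]\<^bsub>?Q\<^esub> (j * m)"
            proof -
              have "\<phi> (w [^]\<^bsub>?GK\<^esub> m) = (\<phi> w) [^]\<^bsub>?Q\<^esub> m" by (rule h.hom_int_pow[OF inK[OF w(2)]])
              also have "\<dots> = Xg [^]\<^bsub>?Q\<^esub> (j * m)" unfolding j by (rule Q.int_pow_pow[OF X(1)])
              finally show ?thesis .
            qed
            then have "\<phi> (w [^]\<^bsub>?GK\<^esub> m) = \<phi> (y0 [^]\<^bsub>?GK\<^esub> j)" unfolding py0pow by (simp add: mult.commute)
            then have e: "w [^]\<^bsub>?GK\<^esub> m \<otimes>\<^bsub>?GK\<^esub> inv\<^bsub>?GK\<^esub> (y0 [^]\<^bsub>?GK\<^esub> j) \<in> K'" (is "?e \<in> K'")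
              by (rule k3[OF Kpow[OF w(2)] Kpow[OF y0K]])
            have fwm: "fst (w [^]\<^bsub>?GK\<^esub> m) = (\<lambda>_. 0)" unfolding fpow[OF w(2)] w(3) by (simp add: smul_def)
            have fyj: "fst (y0 [^]\<^bsub>?GK\<^esub> j) = (\<lambda>_. 0)" unfolding fpow[OF y0K] fy0 by (simp add: smul_def)
            have fe: "fst ?e = (\<lambda>_. 0)" unfolding fmul fwm finv[OF Kpow[OF y0K]] fyj by simp
            have se: "(\<lambda>x. m * b x - j * snd y0 x) = snd ?e"
              unfolding smul0[OF fwm] spow[OF w(2,3)] sinv[OF Kpow[OF y0K] fyj] spow[OF y0K fy0] w(1)
              by (simp add: smul_def)
            have "?e \<in> {g \<in> K'. fst g = (\<lambda>_. 0)}" using e fe by simp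
            with se have "(\<lambda>x. m * b x - j * snd y0 x) \<in> snd ` {g \<in> K'. fst g = (\<lambda>_. 0)}" by (rule image_eqI)
            then show "\<exists>m>0. \<exists>j. (\<lambda>x. m * b x - j * snd y0 x) \<in> snd ` {g \<in> K'. fst g = (\<lambda>_. 0)}"
              using mh(1) by blast
          qed
        qed
      qed
      ultimately show ?thesis using infQ unfolding hrk_def by simp
    qed
  qed
qed



lemma rk_zero: "rk {(\<lambda>_. 0) :: 'x \<Rightarrow> int} = 0"
proof -
  have q: "Qv ` {(\<lambda>_. 0) :: 'x \<Rightarrow> int} = {0}" by (simp add: Qv_def zero_fun_def)
  have sp: "fvs.span {} = fvs.span {0 :: 'x \<Rightarrow> rat}" using fvs.span_insert_0[of "{}"] by simp
  have "fvs.dim {0 :: 'x \<Rightarrow> rat} = 0" using fvs.dim_eq_card[OF sp fvs.independent_empty] by simp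
  then show ?thesis unfolding rk_def q .
qed

lemma hrk_one: "hrk {\<one>\<^bsub>GGamma n E\<^esub>} = 0"
proof -
  have a: "fst ` {\<one>\<^bsub>GGamma n E\<^esub>} = {\<lambda>_. 0}" by (simp add: GG_one)
  have b: "snd ` {g \<in> {\<one>\<^bsub>GGamma n E\<^esub>}. fst g = (\<lambda>_. 0)} = {\<lambda>_. 0}" by (auto simp: GG_one)
  show ?thesis unfolding hrk_def a b rk_zero by simp
qed

lemma card_less_Suc_P:
  "card {i. i < Suc j \<and> P i} = card {i. i < j \<and> P i} + (if P j then 1 else 0)"
proof -
  have "{i. i < Suc j \<and> P i} = {i. i < j \<and> P i} \<union> (if P j then {j} else {})"
    by (auto simp: less_Suc_eq)
  then show ?thesis by (simp add: card_Un_disjoint)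
qed

lemma series_count:
  assumes S: "cyclic_subnormal_series (GGamma n E) H k S"
  shows "num_infinite_factors (GGamma n E) k S = hrk H"
proof -
  let ?P = "\<lambda>i. infinite (carrier ((GGamma n E\<lparr>carrier := S i\<rparr>) Mod (S (Suc i))))"
  have S0: "S 0 = H" and Sk: "S k = {\<one>\<^bsub>GGamma n E\<^esub>}"
    and sg: "\<And>i. i \<le> k \<Longrightarrow> subgroup (S i) (GGamma n E)"
    and st: "\<And>i. i < k \<Longrightarrow> S (Suc i) \<subseteq> S i \<and> S (Suc i) \<lhd> (GGamma n E\<lparr>carrier := S i\<rparr>) \<and>
            cyclic_group ((GGamma n E\<lparr>carrier := S i\<rparr>) Mod (S (Suc i)))"
    using S unfolding cyclic_subnormal_series_def by auto
  have main: "j \<le> k \<Longrightarrow> hrk (S 0) = hrk (S j) + card {i. i < j \<and> ?P i}" for j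
  proof (induction j)
    case 0 then show ?case by simp
  next
    case (Suc j)
    have j: "j < k" using Suc.prems by simp
    have e: "hrk (S j) = hrk (S (Suc j)) + (if ?P j then 1 else 0)"
      using step_lemma[OF sg[of j] sg[of "Suc j"]] st[OF j] j Suc.prems by auto
    show ?case using Suc.IH j e card_less_Suc_P[of j ?P] by simp
  qed
  show ?thesis using main[of k] S0 Sk hrk_one unfolding num_infinite_factors_def by simp
qed



lemma kernel_step:
  fixes G (structure) and \<phi> :: "'a \<Rightarrow> int"
  assumes gG: "group G" and K: "subgroup K G"
    and hom: "\<And>x y. x \<in> K \<Longrightarrow> y \<in> K \<Longrightarrow> \<phi> (x \<otimes> y) = \<phi> x + \<phi> y"
    and K': "K' = {x \<in> K. \<phi> x = 0}"
    and so: "(\<forall>c. \<exists>x\<in>K. \<phi> x = c) \<or> (\<forall>x\<in>K. \<phi> x = 0)"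
  shows "subgroup K' G \<and> K' \<subseteq> K \<and> K' \<lhd> (G\<lparr>carrier := K\<rparr>) \<and>
         cyclic_group ((G\<lparr>carrier := K\<rparr>) Mod K') \<and>
         (infinite (carrier ((G\<lparr>carrier := K\<rparr>) Mod K')) \<longleftrightarrow> (\<forall>c. \<exists>x\<in>K. \<phi> x = c))"
proof -
  let ?GK = "G\<lparr>carrier := K\<rparr>"
  have gGK: "group ?GK" by (rule subgroup.subgroup_is_group[OF K gG])
  interpret GK: group ?GK by (rule gGK)
  have hm: "\<phi> \<in> hom ?GK integer_group"
    by (rule homI) (auto simp: hom)
  interpret h: group_hom ?GK integer_group \<phi>
    by (simp add: group_hom_def group_hom_axioms_def gGK hm)
  have ker: "kernel ?GK integer_group \<phi> = K'" by (auto simp: kernel_def K')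
  have nor: "K' \<lhd> ?GK" using h.normal_kernel unfolding ker .
  have sgK': "subgroup K' G"
    using group.incl_subgroup[OF gG K h.subgroup_kernel] unfolding ker .
  have sub: "K' \<subseteq> K" using K' by blast
  have gQ: "group (?GK Mod K')" by (rule normal.factorgroup_is_group[OF nor])
  show ?thesis
  proof (cases "\<forall>c. \<exists>x\<in>K. \<phi> x = c")
    case True
    have im: "\<phi> ` carrier ?GK = carrier integer_group" using True by (auto simp: image_iff) metis
    have iso: "(\<lambda>Y. the_elem (\<phi> ` Y)) \<in> iso (?GK Mod K') integer_group"
      using h.FactGroup_iso_set[OF im] unfolding ker .
    have "?GK Mod K' \<cong> integer_group" using iso unfolding is_iso_def by blast
    then have cyc: "cyclic_group (?GK Mod K')"
      using isomorphic_group_cyclicity[OF _ gQ group_integer_group] by simp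
    have "bij_betw (\<lambda>Y. the_elem (\<phi> ` Y)) (carrier (?GK Mod K')) (UNIV :: int set)"
      using iso unfolding iso_def by simp
    then have "infinite (carrier (?GK Mod K'))"
      using bij_betw_finite infinite_UNIV_int by blast
    then show ?thesis using sgK' sub nor cyc True by blast
  next
    case False
    then have z: "\<forall>x\<in>K. \<phi> x = 0" using so by blast
    then have KK: "K' = K" using K' by auto
    have sK: "subgroup K ?GK" using GK.subgroup_self by simp
    have c: "carrier (?GK Mod K') = {K}"
    proof -
      have "carrier (?GK Mod K') = (\<lambda>x. K #>\<^bsub>?GK\<^esub> x) ` K"
        using carrier_FactGroup[of ?GK K'] KK by simp
      also have "\<dots> = {K}"
      proof -
        have "K #>\<^bsub>?GK\<^esub> x = K" if "x \<in> K" for x by (rule subgroup.rcos_const[OF sK gGK that])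
        moreover have "K \<noteq> {}" using subgroup.one_closed[OF K] by blast
        ultimately show ?thesis by auto
      qed
      finally show ?thesis .
    qed
    have "trivial_group (?GK Mod K')" unfolding trivial_group_def using gQ c KK by simp
    then have cyc: "cyclic_group (?GK Mod K')" by (rule trivial_imp_cyclic_group)
    show ?thesis using sgK' sub nor cyc False c by simp
  qed
qed



definition HV :: "nat \<Rightarrow> (nat \<Rightarrow> nat \<Rightarrow> bool) \<Rightarrow> nat set \<Rightarrow> ((nat \<Rightarrow> int) \<times> (nat \<times> nat \<Rightarrow> int)) set" where
  "HV n E V = {g \<in> carrier (GGamma n E). \<forall>j<n. j \<notin> V \<longrightarrow> fst g j = 0}"

definition Lne :: "nat \<Rightarrow> (nat \<Rightarrow> nat \<Rightarrow> bool) \<Rightarrow> (nat \<times> nat) list" where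
  "Lne n E = (SOME xs. set xs = nonedges n E \<and> distinct xs)"

definition Sser where
  "Sser n E V m = {g \<in> HV n E V. (\<forall>i < min m n. fst g i = 0) \<and> (\<forall>l < m - n. snd g (Lne n E ! l) = 0)}"

definition phis :: "nat \<Rightarrow> (nat \<Rightarrow> nat \<Rightarrow> bool) \<Rightarrow> nat \<Rightarrow> (nat \<Rightarrow> int) \<times> (nat \<times> nat \<Rightarrow> int) \<Rightarrow> int" where
  "phis n E m g = (if m < n then fst g m else snd g (Lne n E ! (m - n)))"

lemma Lne: "set (Lne n E) = nonedges n E" "distinct (Lne n E)" "length (Lne n E) = card (nonedges n E)"
proof -
  have "\<exists>xs. set xs = nonedges n E \<and> distinct xs" by (rule finite_distinct_list[OF finite_nonedges])
  then have "set (Lne n E) = nonedges n E \<and> distinct (Lne n E)" unfolding Lne_def by (rule someI_ex)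
  then show "set (Lne n E) = nonedges n E" "distinct (Lne n E)" "length (Lne n E) = card (nonedges n E)"
    using distinct_card by fastforce+
qed

lemma HV_subgroup: "subgroup (HV n E V) (GGamma n E)"
proof -
  interpret G: group "GGamma n E" by (rule group_GG)
  show ?thesis
  proof (rule G.subgroupI)
    show "HV n E V \<subseteq> carrier (GGamma n E)" unfolding HV_def by blast
    have "\<one>\<^bsub>GGamma n E\<^esub> \<in> HV n E V" unfolding HV_def by (simp add: GG_one GG_carrier)
    then show "HV n E V \<noteq> {}" by blast
  next
    fix a assume a: "a \<in> HV n E V"
    then have ac: "a \<in> carrier (GGamma n E)" unfolding HV_def by blast
    have "fst (inv\<^bsub>GGamma n E\<^esub> a) = (\<lambda>i. - fst a i)" by (rule M_fst_inv[OF GG_m GG_o group_GG ac])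
    then show "inv\<^bsub>GGamma n E\<^esub> a \<in> HV n E V" using a G.inv_closed[OF ac] unfolding HV_def by simp
  next
    fix a b assume "a \<in> HV n E V" "b \<in> HV n E V"
    then show "a \<otimes>\<^bsub>GGamma n E\<^esub> b \<in> HV n E V" unfolding HV_def
      using G.m_closed by (simp add: GG_mult fst_GGm)
  qed
qed

lemma Sser_0: "Sser n E V 0 = HV n E V" by (simp add: Sser_def)

lemma Sser_fst0: "g \<in> Sser n E V m \<Longrightarrow> n \<le> m \<Longrightarrow> fst g = (\<lambda>_. 0)"
proof -
  assume g: "g \<in> Sser n E V m" and m: "n \<le> m"
  then have c: "g \<in> carrier (GGamma n E)" and l: "\<forall>i<n. fst g i = 0"
    unfolding Sser_def HV_def using min_absorb2[OF m] by auto
  show ?thesis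
  proof
    fix i show "fst g i = 0" using c l unfolding GG_carrier by (cases "i < n") auto
  qed
qed

lemma Sser_Suc: "Sser n E V (Suc m) = {x \<in> Sser n E V m. phis n E m x = 0}"
proof (cases "m < n")
  case True
  then have a: "min (Suc m) n = Suc m" "min m n = m" "Suc m - n = 0" "m - n = 0" by auto
  show ?thesis unfolding Sser_def phis_def a using True by (auto simp: less_Suc_eq)
next
  case False
  then have a: "min (Suc m) n = n" "min m n = n" "Suc m - n = Suc (m - n)" by auto
  show ?thesis unfolding Sser_def phis_def a using False by (auto simp: less_Suc_eq)
qed

lemma phis_hom: "x \<in> Sser n E V m \<Longrightarrow> y \<in> Sser n E V m \<Longrightarrow>
    phis n E m (x \<otimes>\<^bsub>GGamma n E\<^esub> y) = phis n E m x + phis n E m y"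
proof (cases "m < n")
  case True then show ?thesis by (simp add: phis_def GG_mult fst_GGm)
next
  case False
  assume x: "x \<in> Sser n E V m"
  have "fst x = (\<lambda>_. 0)" using Sser_fst0[OF x] False by simp
  then show ?thesis using False by (simp add: phis_def GG_mult snd_GGm0)
qed

lemma phis_so:
  assumes V: "V \<subseteq> {0..<n}" and m: "m < n + card (nonedges n E)"
  shows "((\<forall>c. \<exists>x\<in>Sser n E V m. phis n E m x = c) \<longleftrightarrow> (m \<in> V \<or> n \<le> m)) \<and>
         ((\<forall>c. \<exists>x\<in>Sser n E V m. phis n E m x = c) \<or> (\<forall>x\<in>Sser n E V m. phis n E m x = 0))"
proof (cases "m < n")
  case True
  show ?thesis
  proof (cases "m \<in> V")
    case mV: True
    have "\<exists>x\<in>Sser n E V m. phis n E m x = c" for c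
    proof
      let ?x = "((\<lambda>i. if i = m then c else 0), (\<lambda>_. 0)) :: (nat \<Rightarrow> int) \<times> (nat \<times> nat \<Rightarrow> int)"
      show "?x \<in> Sser n E V m" using True mV unfolding Sser_def HV_def GG_carrier by auto
      show "phis n E m ?x = c" using True by (simp add: phis_def)
    qed
    then show ?thesis using mV by blast
  next
    case mV: False
    have "\<forall>x\<in>Sser n E V m. phis n E m x = 0"
      using True mV unfolding Sser_def HV_def phis_def by auto
    moreover have "\<not> (\<forall>c. \<exists>x\<in>Sser n E V m. phis n E m x = c)"
      using calculation by (metis zero_neq_one)
    ultimately show ?thesis using mV True by auto
  qed
next
  case False
  let ?l = "m - n"
  have l: "?l < length (Lne n E)" using m False Lne(3) by simp
  have ne: "Lne n E ! ?l \<in> nonedges n E" using l Lne(1) nth_mem by blast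
  have dist: "Lne n E ! j \<noteq> Lne n E ! ?l" if "j < ?l" for j
    using nth_eq_iff_index_eq[OF Lne(2)[of n E], of j ?l] that l by simp
  have "\<exists>x\<in>Sser n E V m. phis n E m x = c" for c
  proof
    let ?x = "((\<lambda>_. 0), (\<lambda>p. if p = Lne n E ! ?l then c else 0)) :: (nat \<Rightarrow> int) \<times> (nat \<times> nat \<Rightarrow> int)"
    have "?x \<in> carrier (GGamma n E)" unfolding GG_carrier using ne by auto
    moreover have "\<forall>j<m - n. snd ?x (Lne n E ! j) = 0" using dist by simp
    ultimately show "?x \<in> Sser n E V m" unfolding Sser_def HV_def by simp
    show "phis n E m ?x = c" using False by (simp add: phis_def)
  qed
  then have "\<forall>c. \<exists>x\<in>Sser n E V m. phis n E m x = c" by blast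
  then show ?thesis using False by simp
qed

lemma Sser_last: "Sser n E V (n + card (nonedges n E)) = {\<one>\<^bsub>GGamma n E\<^esub>}"
proof
  show "{\<one>\<^bsub>GGamma n E\<^esub>} \<subseteq> Sser n E V (n + card (nonedges n E))"
    unfolding Sser_def HV_def by (simp add: GG_one GG_carrier)
next
  show "Sser n E V (n + card (nonedges n E)) \<subseteq> {\<one>\<^bsub>GGamma n E\<^esub>}"
  proof
    fix g assume g: "g \<in> Sser n E V (n + card (nonedges n E))"
    have f: "fst g = (\<lambda>_. 0)" using Sser_fst0[OF g] by simp
    have c: "g \<in> carrier (GGamma n E)" using g unfolding Sser_def HV_def by blast
    have sl: "\<forall>l < card (nonedges n E). snd g (Lne n E ! l) = 0" using g unfolding Sser_def by simp
    have "snd g = (\<lambda>_. 0)"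
    proof
      fix p show "snd g p = 0"
      proof (cases "p \<in> nonedges n E")
        case True
        then have "p \<in> set (Lne n E)" using Lne(1) by simp
        then obtain l where l: "l < length (Lne n E)" "Lne n E ! l = p" unfolding in_set_conv_nth by blast
        then show ?thesis using sl Lne(3) by auto
      next
        case False
        have "\<forall>p. p \<notin> nonedges n E \<longrightarrow> snd g p = 0" using c by (simp add: GG_carrier)
        then show ?thesis using False by blast
      qed
    qed
    then show "g \<in> {\<one>\<^bsub>GGamma n E\<^esub>}" using f by (simp add: GG_one prod_eq_iff)
  qed
qed



lemma exists_series:
  assumes V: "V \<subseteq> {0..<n}"
  shows "cyclic_subnormal_series (GGamma n E) (HV n E V) (n + card (nonedges n E)) (Sser n E V) \<and>
         num_infinite_factors (GGamma n E) (n + card (nonedges n E)) (Sser n E V) = card V + card (nonedges n E)"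
proof -
  let ?k = "n + card (nonedges n E)"
  let ?S = "Sser n E V"
  let ?P = "\<lambda>i. infinite (carrier ((GGamma n E\<lparr>carrier := ?S i\<rparr>) Mod (?S (Suc i))))"
  have KS: "subgroup (?S (Suc m)) (GGamma n E) \<and> ?S (Suc m) \<subseteq> ?S m \<and>
            ?S (Suc m) \<lhd> (GGamma n E\<lparr>carrier := ?S m\<rparr>) \<and>
            cyclic_group ((GGamma n E\<lparr>carrier := ?S m\<rparr>) Mod (?S (Suc m))) \<and>
            (?P m \<longleftrightarrow> (\<forall>c. \<exists>x\<in>?S m. phis n E m x = c))"
    if m: "m < ?k" and sg: "subgroup (?S m) (GGamma n E)" for m
  proof -
    have h: "\<And>x y. x \<in> ?S m \<Longrightarrow> y \<in> ?S m \<Longrightarrow>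
        phis n E m (x \<otimes>\<^bsub>GGamma n E\<^esub> y) = phis n E m x + phis n E m y"
      by (rule phis_hom)
    have so: "(\<forall>c. \<exists>x\<in>?S m. phis n E m x = c) \<or> (\<forall>x\<in>?S m. phis n E m x = 0)"
      using phis_so[OF V m] by blast
    show ?thesis using kernel_step[OF group_GG sg h Sser_Suc so] by blast
  qed
  have sg: "m \<le> ?k \<Longrightarrow> subgroup (?S m) (GGamma n E)" for m
  proof (induction m)
    case 0 then show ?case using HV_subgroup Sser_0 by simp
  next
    case (Suc m) then show ?case using KS[of m] by simp
  qed
  have ser: "cyclic_subnormal_series (GGamma n E) (HV n E V) ?k ?S"
    unfolding cyclic_subnormal_series_def using Sser_0 Sser_last sg KS by simp
  have "{i. i < ?k \<and> ?P i} = V \<union> {n..<?k}"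
  proof -
    have "?P i \<longleftrightarrow> (i \<in> V \<or> n \<le> i)" if "i < ?k" for i
      using KS[OF that sg] phis_so[OF V that] that by auto
    note iff = this
    show ?thesis
    proof
      show "{i. i < ?k \<and> ?P i} \<subseteq> V \<union> {n..<?k}" using iff by auto
      show "V \<union> {n..<?k} \<subseteq> {i. i < ?k \<and> ?P i}"
      proof
        fix x assume x: "x \<in> V \<union> {n..<?k}"
        then have xk: "x < ?k" using V by auto
        then show "x \<in> {i. i < ?k \<and> ?P i}" using iff[OF xk] x by auto
      qed
    qed
  qed
  moreover have "card (V \<union> {n..<?k}) = card V + card (nonedges n E)"
  proof -
    have "finite V" using V finite_subset by blast
    moreover have "V \<inter> {n..<?k} = {}" using V by auto
    ultimately show ?thesis by (simp add: card_Un_disjoint)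
  qed
  ultimately show ?thesis using ser unfolding num_infinite_factors_def by simp
qed

lemma comm_iff:
  "GGamma_mult n E h g = GGamma_mult n E g h \<longleftrightarrow>
   (\<forall>p\<in>nonedges n E. fst h (snd p) * fst g (fst p) = fst g (snd p) * fst h (fst p))"
proof -
  have "GGamma_mult n E h g = GGamma_mult n E g h \<longleftrightarrow>
        (\<forall>p. (if p \<in> nonedges n E then fst h (snd p) * fst g (fst p) else 0) =
             (if p \<in> nonedges n E then fst g (snd p) * fst h (fst p) else 0))"
    unfolding GGamma_mult_def by (auto simp: fun_eq_iff algebra_simps)
  also have "\<dots> \<longleftrightarrow> (\<forall>p\<in>nonedges n E. fst h (snd p) * fst g (fst p) = fst g (snd p) * fst h (fst p))"
    by (metis (mono_tags, lifting))
  finally show ?thesis .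
qed



lemma cond_iff:
  fixes h :: "(nat \<Rightarrow> int) \<times> (nat \<times> nat \<Rightarrow> int)" and z :: int
  assumes sym: "\<And>i j. E i j \<Longrightarrow> E j i" and z: "z \<noteq> 0" and i0: "i0 < n"
  shows "(\<forall>p\<in>nonedges n E. fst h (snd p) * (if fst p = i0 then z else 0) =
             (if snd p = i0 then z else 0) * fst h (fst p))
         \<longleftrightarrow> (\<forall>j<n. j \<notin> {j. j < n \<and> (j = i0 \<or> E i0 j)} \<longrightarrow> fst h j = 0)"
proof
  assume L: "\<forall>p\<in>nonedges n E. fst h (snd p) * (if fst p = i0 then z else 0) =
             (if snd p = i0 then z else 0) * fst h (fst p)"
  show "\<forall>j<n. j \<notin> {j. j < n \<and> (j = i0 \<or> E i0 j)} \<longrightarrow> fst h j = 0"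
  proof (intro allI impI)
    fix j assume j: "j < n" "j \<notin> {j. j < n \<and> (j = i0 \<or> E i0 j)}"
    then have ji: "j \<noteq> i0" and nE: "\<not> E i0 j" by auto
    have nE': "\<not> E j i0" using nE sym by blast
    show "fst h j = 0"
    proof (cases "i0 < j")
      case True
      then have "(i0, j) \<in> nonedges n E" using j nE by (simp add: nonedges_def)
      from L[rule_format, OF this] have "fst h j * z = 0" using ji by simp
      then show ?thesis using z by simp
    next
      case False
      then have "j < i0" using ji by simp
      then have "(j, i0) \<in> nonedges n E" using i0 nE' by (simp add: nonedges_def)
      from L[rule_format, OF this] have "0 = z * fst h j" using ji by simp
      then show ?thesis using z by simp
    qed
  qed
next
  assume R: "\<forall>j<n. j \<notin> {j. j < n \<and> (j = i0 \<or> E i0 j)} \<longrightarrow> fst h j = 0"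
  show "\<forall>p\<in>nonedges n E. fst h (snd p) * (if fst p = i0 then z else 0) =
             (if snd p = i0 then z else 0) * fst h (fst p)"
  proof
    fix p assume p: "p \<in> nonedges n E"
    obtain a b where ab: "p = (a, b)" by (cases p)
    have abn: "a < b" "b < n" "\<not> E a b" using p ab by (auto simp: nonedges_def)
    show "fst h (snd p) * (if fst p = i0 then z else 0) = (if snd p = i0 then z else 0) * fst h (fst p)"
    proof (cases "a = i0")
      case True
      then have "b \<noteq> i0" "\<not> E i0 b" using abn by auto
      then have "fst h b = 0" using R abn by auto
      then show ?thesis using ab True \<open>b \<noteq> i0\<close> by simp
    next
      case False
      show ?thesis
      proof (cases "b = i0")
        case True
        then have "\<not> E i0 a" using abn sym by blast
        then have "fst h a = 0" using R abn False by auto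
        then show ?thesis using ab True False by simp
      next
        case False2: False
        then show ?thesis using ab False by simp
      qed
    qed
  qed
qed

theorem lemma4p1:
  fixes n :: nat and E :: "nat \<Rightarrow> nat \<Rightarrow> bool"
    and i0 :: nat and z :: int and t :: "nat \<times> nat \<Rightarrow> int"
  assumes sym: "\<And>i j. E i j \<Longrightarrow> E j i"
    and irrefl: "\<And>i. \<not> E i i"
    and dom: "\<And>i j. E i j \<Longrightarrow> i < n \<and> j < n"
    and i0: "i0 < n"
    and z: "z \<noteq> 0"
    and t: "\<And>p. p \<notin> nonedges n E \<Longrightarrow> t p = 0"
  shows "hirsch (GGamma n E)
           (centralizer (GGamma n E) ((\<lambda>i. if i = i0 then z else 0), t))
         = vertex_degree n E i0 + card (nonedges n E) + 1"
proof -
  define V0 where "V0 = {j. j < n \<and> (j = i0 \<or> E i0 j)}"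
  let ?g0 = "((\<lambda>i. if i = i0 then z else 0), t) :: (nat \<Rightarrow> int) \<times> (nat \<times> nat \<Rightarrow> int)"
  let ?N = "card (nonedges n E)"
  have V0sub: "V0 \<subseteq> {0..<n}" unfolding V0_def by auto
  have cent: "centralizer (GGamma n E) ?g0 = HV n E V0"
  proof -
    have "h \<otimes>\<^bsub>GGamma n E\<^esub> ?g0 = ?g0 \<otimes>\<^bsub>GGamma n E\<^esub> h \<longleftrightarrow> (\<forall>j<n. j \<notin> V0 \<longrightarrow> fst h j = 0)" for h
      unfolding GG_mult comm_iff V0_def using cond_iff[OF sym z i0, where h=h] by simp
    then show ?thesis unfolding centralizer_def HV_def by auto
  qed
  have cardV0: "card V0 = vertex_degree n E i0 + 1"
  proof -
    have "V0 = insert i0 {j. j < n \<and> E i0 j}" unfolding V0_def using i0 by auto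
    moreover have "i0 \<notin> {j. j < n \<and> E i0 j}" using irrefl by auto
    moreover have "finite {j. j < n \<and> E i0 j}" by simp
    ultimately show ?thesis unfolding vertex_degree_def by simp
  qed
  have ex: "cyclic_subnormal_series (GGamma n E) (HV n E V0) (n + ?N) (Sser n E V0) \<and>
         num_infinite_factors (GGamma n E) (n + ?N) (Sser n E V0) = card V0 + ?N"
    by (rule exists_series[OF V0sub])
  have "(THE m. \<exists>k S. cyclic_subnormal_series (GGamma n E) (HV n E V0) k S \<and>
          num_infinite_factors (GGamma n E) k S = m) = card V0 + ?N"
  proof (rule the_equality)
    show "\<exists>k S. cyclic_subnormal_series (GGamma n E) (HV n E V0) k S \<and>
          num_infinite_factors (GGamma n E) k S = card V0 + ?N" using ex by blast
  next
    fix m assume "\<exists>k S. cyclic_subnormal_series (GGamma n E) (HV n E V0) k S \<and>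
          num_infinite_factors (GGamma n E) k S = m"
    then obtain k S where kS: "cyclic_subnormal_series (GGamma n E) (HV n E V0) k S"
      "num_infinite_factors (GGamma n E) k S = m" by blast
    have "m = hrk (HV n E V0)" using series_count[OF kS(1)] kS(2) by simp
    also have "\<dots> = card V0 + ?N" using series_count[OF ex[THEN conjunct1]] ex[THEN conjunct2] by simp
    finally show "m = card V0 + ?N" .
  qed
  then show ?thesis unfolding hirsch_def cent cardV0 by simp
qed


end
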